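(* Let $V=\{(a_1,a_2,\ldots)\mid a_i\in\mathbb{C},\ \sum_i|a_i|^2<\infty\}$ with quadratic form $f((a_i))=\sum_i a_i^2$, let $A=Cl(V,f)$ be its Clifford algebra, and let $\mathcal{V}=\{v_i\mid i\ge1\}$, where $v_i$ is the sequence with $1$ in position $i$ and $0$ elsewhere. Then the centralizer of $\mathcal{V}$ in $A$ is $\mathbb{C}\cdot1$.
   Context: The Clifford algebra $Cl(V,f)$ is the unital associative $\mathbb{C}$-algebra generated by $V$ and $1$ subject to $v^2=f(v)\cdot1$ for all $v\in V$. The centralizer of a subset $S$ is $\{a\in A\mid as=sa \text{ for all } s\in S\}$. *)

theory Defs
  imports "HOL-Analysis.Analysis" "HOL-Library.Poly_Mapping"
begin

typedef l2 = "{a :: nat \<Rightarrow> complex. summable (\<lambda>i. (cmod (a i))^2)}"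
  by (rule exI[of _ "\<lambda>_. 0"]) simp

definition qf :: "l2 \<Rightarrow> complex" where
  "qf v = suminf (\<lambda>i. (Rep_l2 v i)^2)"

text \<open>Unit sequences; index i (from 0) stands for position i+1 in the paper.\<close>
definition unitv :: "nat \<Rightarrow> l2" where
  "unitv i = Abs_l2 (\<lambda>j. if j = i then 1 else 0)"

datatype 'a fword = FWord "'a list"

instantiation fword :: (type) monoid_add
begin
definition zero_fword :: "'a fword" where "zero_fword = FWord []"
fun plus_fword :: "'a fword \<Rightarrow> 'a fword \<Rightarrow> 'a fword" where
  "plus_fword (FWord xs) (FWord ys) = FWord (xs @ ys)"
instance
proof
  fix a b c :: "'a fword"
  show "a + b + c = a + (b + c)" by (cases a; cases b; cases c) simp
  show "0 + a = a" by (cases a) (simp add: zero_fword_def)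
  show "a + 0 = a" by (cases a) (simp add: zero_fword_def)
qed
end

text \<open>Elements of the free algebra: finitely supported C-linear combinations of words,
  multiplication is concatenation (convolution).\<close>
type_synonym 'a freealg = "'a fword \<Rightarrow>\<^sub>0 complex"

definition gen :: "'a \<Rightarrow> 'a freealg" where
  "gen v = Poly_Mapping.single (FWord [v]) 1"

definition scal :: "complex \<Rightarrow> 'a freealg" where
  "scal c = Poly_Mapping.single (FWord []) c"

text \<open>Two-sided ideals of the free algebra (C-subspaces closed under left and right
  multiplication; scalar multiples are products with scal c).\<close>
definition two_sided_ideal :: "'a freealg set \<Rightarrow> bool" where
  "two_sided_ideal J \<longleftrightarrow> 0 \<in> J \<and> (\<forall>x\<in>J. \<forall>y\<in>J. x + y \<in> J)
     \<and> (\<forall>x\<in>J. \<forall>a b. a * x * b \<in> J)"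

definition ideal_generated :: "'a freealg set \<Rightarrow> 'a freealg set" where
  "ideal_generated R = \<Inter>{J. R \<subseteq> J \<and> two_sided_ideal J}"

definition cl_relations :: "l2 freealg set" where
  "cl_relations =
     {gen u - gen v - gen w | u v w. Rep_l2 u = (\<lambda>i. Rep_l2 v i + Rep_l2 w i)}
   \<union> {gen u - scal c * gen v | u v c. Rep_l2 u = (\<lambda>i. c * Rep_l2 v i)}
   \<union> {gen v * gen v - scal (qf v) | v. True}"

definition cl_ideal :: "l2 freealg set" where
  "cl_ideal = ideal_generated cl_relations"

definition cl_eq :: "l2 freealg \<Rightarrow> l2 freealg \<Rightarrow> bool" where
  "cl_eq p q \<longleftrightarrow> p - q \<in> cl_ideal"

text \<open>Centralizer of the image of the set {v_i} in A (as a set of representatives).\<close>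
definition centralizer_units :: "l2 freealg set" where
  "centralizer_units = {p. \<forall>i. cl_eq (p * gen (unitv i)) (gen (unitv i) * p)}"

end

theory Submission
  imports Defs
begin


notation cl_eq (infix "\<simeq>" 50)

lemma ideal_generated_ideal: "two_sided_ideal (ideal_generated R)"
  unfolding two_sided_ideal_def ideal_generated_def by blast

lemma ideal_generated_sub: "R \<subseteq> ideal_generated R"
  unfolding ideal_generated_def by blast

lemma I0: "0 \<in> cl_ideal"
  using ideal_generated_ideal unfolding cl_ideal_def two_sided_ideal_def by blast
lemma Iadd: "x \<in> cl_ideal \<Longrightarrow> y \<in> cl_ideal \<Longrightarrow> x + y \<in> cl_ideal"
  using ideal_generated_ideal unfolding cl_ideal_def two_sided_ideal_def by blast
lemma Imul: "x \<in> cl_ideal \<Longrightarrow> a * x * b \<in> cl_ideal"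
  using ideal_generated_ideal unfolding cl_ideal_def two_sided_ideal_def by blast
lemma Imull: "x \<in> cl_ideal \<Longrightarrow> a * x \<in> cl_ideal"
  using Imul[of x a 1] by simp
lemma Imulr: "x \<in> cl_ideal \<Longrightarrow> x * b \<in> cl_ideal"
  using Imul[of x 1 b] by simp
lemma Ineg: "x \<in> cl_ideal \<Longrightarrow> - x \<in> cl_ideal"
  using Imull[of x "-1"] by simp
lemma Irel: "x \<in> cl_relations \<Longrightarrow> x \<in> cl_ideal"
  using ideal_generated_sub unfolding cl_ideal_def by blast

lemma cl_refl[simp]: "x \<simeq> x" by (simp add: cl_eq_def I0)
lemma cl_sym: "x \<simeq> y \<Longrightarrow> y \<simeq> x"
  unfolding cl_eq_def using Ineg by fastforce
lemma cl_trans[trans]: "x \<simeq> y \<Longrightarrow> y \<simeq> z \<Longrightarrow> x \<simeq> z"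
  unfolding cl_eq_def using Iadd by fastforce
lemma cl_eq_trans[trans]: "x = y \<Longrightarrow> y \<simeq> z \<Longrightarrow> x \<simeq> z" by simp
lemma cl_trans_eq[trans]: "x \<simeq> y \<Longrightarrow> y = z \<Longrightarrow> x \<simeq> z" by simp
lemma cl_add: "x \<simeq> x' \<Longrightarrow> y \<simeq> y' \<Longrightarrow> x + y \<simeq> x' + y'"
  unfolding cl_eq_def using Iadd by (metis add_diff_add)
lemma cl_neg: "x \<simeq> x' \<Longrightarrow> - x \<simeq> - x'"
  unfolding cl_eq_def using Ineg by (metis minus_diff_eq minus_diff_minus)
lemma cl_diff: "x \<simeq> x' \<Longrightarrow> y \<simeq> y' \<Longrightarrow> x - y \<simeq> x' - y'"
  using cl_add[OF _ cl_neg] by (metis diff_conv_add_uminus)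
lemma cl_mul: "x \<simeq> x' \<Longrightarrow> y \<simeq> y' \<Longrightarrow> x * y \<simeq> x' * y'"
proof -
  assume a: "x \<simeq> x'" "y \<simeq> y'"
  have "x * y - x' * y' = (x - x') * y + x' * (y - y')" by (simp add: algebra_simps)
  moreover have "(x - x') * y \<in> cl_ideal" using a Imulr unfolding cl_eq_def by blast
  moreover have "x' * (y - y') \<in> cl_ideal" using a Imull unfolding cl_eq_def by blast
  ultimately show ?thesis unfolding cl_eq_def using Iadd by simp
qed
lemma cl_mull: "y \<simeq> y' \<Longrightarrow> x * y \<simeq> x * y'" by (simp add: cl_mul)
lemma cl_mulr: "x \<simeq> x' \<Longrightarrow> x * y \<simeq> x' * y" by (simp add: cl_mul)
lemma cl_sum_list: "list_all2 (\<simeq>) xs ys \<Longrightarrow> sum_list xs \<simeq> sum_list ys"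
  by (induction rule: list_all2_induct) (auto intro: cl_add)
lemma cl_sum: "(\<And>a. a \<in> A \<Longrightarrow> g a \<simeq> h a) \<Longrightarrow> sum g A \<simeq> sum h A"
  by (induction A rule: infinite_finite_induct) (auto intro: cl_add)
lemma cl_0_iff: "x \<simeq> y \<longleftrightarrow> x - y \<simeq> 0" by (simp add: cl_eq_def)

lemma scal_single: "scal c = Poly_Mapping.single 0 c" by (simp add: scal_def zero_fword_def)
lemma scal_mult[simp]: "scal c * scal d = scal (c * d)" by (simp add: scal_single mult_single)
lemma scal_add: "scal (c + d) = scal c + scal d" by (simp add: scal_single single_add)
lemma scal_diff: "scal (c - d) = scal c - scal d" by (simp add: scal_single single_diff)
lemma scal_uminus: "scal (- c) = - scal c" by (simp add: scal_single single_uminus)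
lemma scal_1[simp]: "scal 1 = 1" by (simp add: scal_single)
lemma scal_0[simp]: "scal 0 = 0" by (simp add: scal_single)
lemma scal_sum: "scal (sum g A) = (\<Sum>a\<in>A. scal (g a))"
  by (induction A rule: infinite_finite_induct) (auto simp: scal_add)

lemma update_eq_add: "k \<notin> Poly_Mapping.keys f \<Longrightarrow> Poly_Mapping.update k v f = f + Poly_Mapping.single k v"
  by (rule poly_mapping_eqI) (auto simp: lookup_update lookup_add lookup_single in_keys_iff when_def)

lemma scal_comm: "scal c * x = x * scal c"
proof (induction x rule: update_induct)
  case const then show ?case by simp
next
  case (update f a b)
  have "scal c * Poly_Mapping.single a b = Poly_Mapping.single a b * scal c"
    by (simp add: scal_single mult_single mult.commute)
  then show ?case using update by (simp add: update_eq_add algebra_simps)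
qed

lemma scal_mult_assoc: "scal c * (scal d * x) = scal (c * d) * x"
  by (simp flip: mult.assoc)



lemma sqb1: fixes a b :: real shows "(a+b)^2 \<le> 2*a^2 + 2*b^2"
proof -
  have "0 \<le> (a-b)^2" by simp
  then show ?thesis by (simp add: power2_eq_square algebra_simps)
qed
lemma sqb2: fixes a b :: real shows "2*(a*b) \<le> a^2 + b^2"
proof -
  have "0 \<le> (a-b)^2" by simp
  then show ?thesis by (simp add: power2_eq_square algebra_simps)
qed

definition sq :: "(nat \<Rightarrow> complex) \<Rightarrow> bool" where
  "sq x \<longleftrightarrow> summable (\<lambda>i. (cmod (x i))^2)"
definition bf :: "(nat \<Rightarrow> complex) \<Rightarrow> (nat \<Rightarrow> complex) \<Rightarrow> complex" where
  "bf x y = suminf (\<lambda>i. x i * y i)"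
definition G :: "(nat \<Rightarrow> complex) \<Rightarrow> l2 freealg" where
  "G x = gen (Abs_l2 x)"
definition dl :: "nat \<Rightarrow> nat \<Rightarrow> complex" where
  "dl i = (\<lambda>j. if j = i then 1 else 0)"

lemma sq_Rep: "sq (Rep_l2 v)" using Rep_l2[of v] by (simp add: sq_def)
lemma Rep_Abs: "sq x \<Longrightarrow> Rep_l2 (Abs_l2 x) = x"
  by (rule Abs_l2_inverse) (simp add: sq_def)
lemma gen_G: "gen v = G (Rep_l2 v)" by (simp add: G_def Rep_l2_inverse)

lemma sq_finsupp: assumes "\<forall>i\<ge>K. x i = 0" shows "sq x"
  unfolding sq_def
  by (rule summable_finite[of "{..<K}"]) (use assms in auto)

lemma sq_zero: "sq (\<lambda>i. 0)" by (rule sq_finsupp[of 0]) auto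
lemma sq_dl: "sq (dl i)" by (rule sq_finsupp[of "Suc i"]) (auto simp: dl_def)

lemma sq_add: assumes "sq x" "sq y" shows "sq (\<lambda>i. x i + y i)"
proof -
  have bnd: "(cmod (x i + y i))^2 \<le> 2 * (cmod (x i))^2 + 2 * (cmod (y i))^2" for i
  proof -
    have "cmod (x i + y i) \<le> cmod (x i) + cmod (y i)" by (rule norm_triangle_ineq)
    then have "(cmod (x i + y i))^2 \<le> (cmod (x i) + cmod (y i))^2"
      by (simp add: power_mono)
    also have "\<dots> \<le> 2 * (cmod (x i))^2 + 2 * (cmod (y i))^2"
      by (rule sqb1)
    finally show ?thesis .
  qed
  have sg: "summable (\<lambda>i. 2 * (cmod (x i))^2 + 2 * (cmod (y i))^2)"
    using assms unfolding sq_def by (intro summable_add summable_mult)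
  show ?thesis unfolding sq_def
    by (rule summable_comparison_test'[where N=0, OF sg]) (use bnd in auto)
qed

lemma sq_scale: assumes "sq x" shows "sq (\<lambda>i. c * x i)"
proof -
  have "summable (\<lambda>i. (cmod c)^2 * (cmod (x i))^2)"
    using assms unfolding sq_def by (intro summable_mult)
  then show ?thesis unfolding sq_def by (simp add: norm_mult power_mult_distrib)
qed

lemma sq_neg: "sq x \<Longrightarrow> sq (\<lambda>i. - x i)"
  using sq_scale[of x "-1"] by simp

lemma sq_diff: "sq x \<Longrightarrow> sq y \<Longrightarrow> sq (\<lambda>i. x i - y i)"
  using sq_add[of x "\<lambda>i. - y i"] sq_neg[of y] by simp

lemma sq_sum: "finite A \<Longrightarrow> (\<And>a. a \<in> A \<Longrightarrow> sq (g a)) \<Longrightarrow> sq (\<lambda>i. \<Sum>a\<in>A. g a i)"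
  by (induction A rule: finite_induct) (auto simp: sq_zero intro: sq_add)

lemma sq_lincomb: "finite A \<Longrightarrow> (\<And>a. a \<in> A \<Longrightarrow> sq (g a)) \<Longrightarrow> sq (\<lambda>i. \<Sum>a\<in>A. c a * g a i)"
  using sq_sum[of A "\<lambda>a i. c a * g a i"] sq_scale by auto

lemma summable_prod: assumes "sq x" "sq y" shows "summable (\<lambda>i. x i * y i)"
proof -
  have bnd: "norm (x i * y i) \<le> (cmod (x i))^2 + (cmod (y i))^2" for i
  proof -
    have "2 * (cmod (x i) * cmod (y i)) \<le> (cmod (x i))^2 + (cmod (y i))^2"
      by (rule sqb2)
    moreover have "0 \<le> cmod (x i) * cmod (y i)" by simp
    moreover have "norm (x i * y i) = cmod (x i) * cmod (y i)" by (simp add: norm_mult)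
    ultimately show ?thesis by linarith
  qed
  have sg: "summable (\<lambda>i. (cmod (x i))^2 + (cmod (y i))^2)"
    using assms unfolding sq_def by (intro summable_add)
  show ?thesis
    by (rule summable_norm_cancel, rule summable_comparison_test'[where N=0, OF sg]) (use bnd in auto)
qed

lemma bf_comm: "bf x y = bf y x" unfolding bf_def by (simp add: mult.commute)

lemma bf_add_left: assumes "sq x" "sq y" "sq z"
  shows "bf (\<lambda>i. x i + y i) z = bf x z + bf y z"
  unfolding bf_def using summable_prod[OF assms(1,3)] summable_prod[OF assms(2,3)]
  by (simp add: distrib_right suminf_add)

lemma bf_scale_left: "sq x \<Longrightarrow> sq z \<Longrightarrow> bf (\<lambda>i. c * x i) z = c * bf x z"
  unfolding bf_def using summable_prod[of x z] by (simp add: mult.assoc suminf_mult)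

lemma bf_sum_left: assumes "finite A" "\<And>a. a \<in> A \<Longrightarrow> sq (g a)" "sq z"
  shows "bf (\<lambda>i. \<Sum>a\<in>A. g a i) z = (\<Sum>a\<in>A. bf (g a) z)"
  using assms
proof (induction A rule: finite_induct)
  case empty then show ?case by (simp add: bf_def)
next
  case (insert a A)
  have "bf (\<lambda>i. \<Sum>a\<in>insert a A. g a i) z = bf (\<lambda>i. g a i + (\<Sum>a\<in>A. g a i)) z"
    using insert by simp
  also have "\<dots> = bf (g a) z + bf (\<lambda>i. \<Sum>a\<in>A. g a i) z"
    using insert by (intro bf_add_left) (auto intro: sq_sum)
  finally show ?case using insert by simp
qed

lemma bf_lincomb_left: assumes "finite A" "\<And>a. a \<in> A \<Longrightarrow> sq (g a)" "sq z"
  shows "bf (\<lambda>i. \<Sum>a\<in>A. c a * g a i) z = (\<Sum>a\<in>A. c a * bf (g a) z)"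
  using bf_sum_left[of A "\<lambda>a i. c a * g a i" z] assms sq_scale
  by (simp add: bf_scale_left)

lemma bf_lincomb_right: assumes "finite A" "\<And>a. a \<in> A \<Longrightarrow> sq (g a)" "sq z"
  shows "bf z (\<lambda>i. \<Sum>a\<in>A. c a * g a i) = (\<Sum>a\<in>A. c a * bf z (g a))"
  using bf_lincomb_left[OF assms] by (simp add: bf_comm)

lemma bf_add_right: "sq x \<Longrightarrow> sq y \<Longrightarrow> sq z \<Longrightarrow> bf z (\<lambda>i. x i + y i) = bf z x + bf z y"
  using bf_add_left by (simp add: bf_comm)
lemma bf_scale_right: "sq x \<Longrightarrow> sq z \<Longrightarrow> bf z (\<lambda>i. c * x i) = c * bf z x"
  using bf_scale_left by (simp add: bf_comm)
lemma bf_diff_left: assumes "sq x" "sq y" "sq z"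
  shows "bf (\<lambda>i. x i - y i) z = bf x z - bf y z"
  using bf_add_left[OF assms(1) sq_neg[OF assms(2)] assms(3)] bf_scale_left[of y z "-1"] assms by simp
lemma bf_diff_right: "sq x \<Longrightarrow> sq y \<Longrightarrow> sq z \<Longrightarrow> bf z (\<lambda>i. x i - y i) = bf z x - bf z y"
  using bf_diff_left by (simp add: bf_comm)

lemma bf_finsupp: assumes "\<forall>i\<ge>K. x i = 0" shows "bf x y = (\<Sum>i<K. x i * y i)"
  unfolding bf_def by (rule suminf_finite) (use assms in auto)

lemma bf_dl: "bf (dl i) y = y i"
  by (subst bf_finsupp[of "Suc i"]) (auto simp: dl_def)

lemma qf_Abs: "sq x \<Longrightarrow> qf (Abs_l2 x) = bf x x"
  by (simp add: qf_def Rep_Abs bf_def power2_eq_square)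

section \<open>Clifford relations\<close>

lemma G_add: assumes "sq x" "sq y" shows "G (\<lambda>i. x i + y i) \<simeq> G x + G y"
proof -
  have "gen (Abs_l2 (\<lambda>i. x i + y i)) - gen (Abs_l2 x) - gen (Abs_l2 y) \<in> cl_relations"
    unfolding cl_relations_def
    apply (rule UnI1, rule UnI1, rule CollectI)
    apply (rule exI[of _ "Abs_l2 (\<lambda>i. x i + y i)"], rule exI[of _ "Abs_l2 x"], rule exI[of _ "Abs_l2 y"])
    using assms sq_add[OF assms] by (simp add: Rep_Abs)
  then show ?thesis unfolding cl_eq_def G_def using Irel by (simp add: diff_diff_eq)
qed

lemma G_scale: assumes "sq x" shows "G (\<lambda>i. c * x i) \<simeq> scal c * G x"
proof -
  have "gen (Abs_l2 (\<lambda>i. c * x i)) - scal c * gen (Abs_l2 x) \<in> cl_relations"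
    unfolding cl_relations_def
    apply (rule UnI1, rule UnI2, rule CollectI)
    apply (rule exI[of _ "Abs_l2 (\<lambda>i. c * x i)"], rule exI[of _ "Abs_l2 x"], rule exI[of _ c])
    using assms sq_scale[OF assms] by (simp add: Rep_Abs)
  then show ?thesis unfolding cl_eq_def G_def using Irel by simp
qed

lemma G_sq: assumes "sq x" shows "G x * G x \<simeq> scal (bf x x)"
proof -
  have "gen (Abs_l2 x) * gen (Abs_l2 x) - scal (qf (Abs_l2 x)) \<in> cl_relations"
    unfolding cl_relations_def by auto
  then show ?thesis unfolding cl_eq_def G_def using Irel assms by (simp add: qf_Abs)
qed

lemma G_zero: "G (\<lambda>i. 0) \<simeq> 0"
  using G_scale[OF sq_zero, of 0] by simp

lemma G_anti: assumes "sq x" "sq y" shows "G x * G y + G y * G x \<simeq> scal (2 * bf x y)"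
proof -
  let ?s = "\<lambda>i. x i + y i"
  have s: "sq ?s" using sq_add[OF assms] .
  have "bf ?s ?s = bf x x + bf y y + 2 * bf x y"
    using assms s by (simp add: bf_add_left bf_add_right bf_comm[of y x])
  have "G ?s * G ?s \<simeq> (G x + G y) * (G x + G y)"
    using G_add[OF assms] by (intro cl_mul)
  then have "(G x + G y) * (G x + G y) \<simeq> scal (bf ?s ?s)"
    using G_sq[OF s] cl_sym cl_trans by blast
  then have 1: "G x * G x + G y * G y + (G x * G y + G y * G x) \<simeq> scal (bf x x) + scal (bf y y) + scal (2 * bf x y)"
    using \<open>bf ?s ?s = _\<close> by (simp add: algebra_simps scal_add)
  have 2: "G x * G x + G y * G y \<simeq> scal (bf x x) + scal (bf y y)"
    using G_sq assms by (intro cl_add)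
  have "G x * G x + G y * G y + (G x * G y + G y * G x) - (G x * G x + G y * G y)
     \<simeq> scal (bf x x) + scal (bf y y) + scal (2 * bf x y) - (scal (bf x x) + scal (bf y y))"
    using 1 2 by (rule cl_diff)
  then show ?thesis by simp
qed

lemma G_lincomb: assumes "finite A" "\<And>a. a \<in> A \<Longrightarrow> sq (g a)"
  shows "G (\<lambda>i. \<Sum>a\<in>A. c a * g a i) \<simeq> (\<Sum>a\<in>A. scal (c a) * G (g a))"
  using assms
proof (induction A rule: finite_induct)
  case empty then show ?case using G_zero by simp
next
  case (insert a A)
  have "G (\<lambda>i. \<Sum>a\<in>insert a A. c a * g a i) = G (\<lambda>i. c a * g a i + (\<Sum>a\<in>A. c a * g a i))"
    using insert by simp
  also have "\<dots> \<simeq> G (\<lambda>i. c a * g a i) + G (\<lambda>i. \<Sum>a\<in>A. c a * g a i)"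
    using insert by (intro G_add sq_scale sq_lincomb) auto
  also have "\<dots> \<simeq> scal (c a) * G (g a) + (\<Sum>a\<in>A. scal (c a) * G (g a))"
    using insert by (intro cl_add G_scale) auto
  finally show ?case using insert by simp
qed



definition ON :: "nat \<Rightarrow> (nat \<Rightarrow> nat \<Rightarrow> complex) \<Rightarrow> bool" where
  "ON n f \<longleftrightarrow> (\<forall>a<n. sq (f a)) \<and> (\<forall>a<n. \<forall>b<n. bf (f a) (f b) = (if a = b then 1 else 0))"

primrec fprod :: "(nat \<Rightarrow> nat \<Rightarrow> complex) \<Rightarrow> nat list \<Rightarrow> l2 freealg" where
  "fprod f [] = 1"
| "fprod f (a # as) = G (f a) * fprod f as"

lemma fprod_append: "fprod f (l @ m) = fprod f l * fprod f m"
  by (induction l) (auto simp: mult.assoc)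

definition ev :: "(nat \<Rightarrow> nat \<Rightarrow> complex) \<Rightarrow> (complex \<times> nat list) list \<Rightarrow> l2 freealg" where
  "ev f L = sum_list (map (\<lambda>(c, as). scal c * fprod f as) L)"

lemma ev_Nil[simp]: "ev f [] = 0" by (simp add: ev_def)
lemma ev_Cons[simp]: "ev f ((c, as) # L) = scal c * fprod f as + ev f L" by (simp add: ev_def)
lemma ev_append: "ev f (L @ M) = ev f L + ev f M" by (simp add: ev_def)

definition mulL :: "(complex \<times> nat list) list \<Rightarrow> (complex \<times> nat list) list \<Rightarrow> (complex \<times> nat list) list" where
  "mulL L M = concat (map (\<lambda>(c, l). map (\<lambda>(d, m). (c * d, l @ m)) M) L)"

lemma ev_mul1: "ev f (map (\<lambda>(d, m). (c * d, l @ m)) M) = scal c * fprod f l * ev f M"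
proof (induction M)
  case Nil then show ?case by simp
next
  case (Cons dm M)
  obtain d m where dm: "dm = (d, m)" by force
  have "scal (c * d) * fprod f (l @ m) = scal c * fprod f l * (scal d * fprod f m)"
    by (simp add: fprod_append mult.assoc flip: scal_mult)
       (metis mult.assoc scal_comm)
  then show ?case using Cons dm by (simp add: algebra_simps)
qed

lemma ev_mulL: "ev f (mulL L M) = ev f L * ev f M"
proof (induction L)
  case Nil then show ?case by (simp add: mulL_def)
next
  case (Cons cl L)
  obtain c l where cl: "cl = (c, l)" by force
  have "mulL (cl # L) M = map (\<lambda>(d, m). (c * d, l @ m)) M @ mulL L M"
    by (simp add: mulL_def cl)
  then have "ev f (mulL (cl # L) M) = scal c * fprod f l * ev f M + ev f L * ev f M"
    using Cons by (simp add: ev_append ev_mul1)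
  then show ?case using cl by (simp add: distrib_right)
qed

lemma mulL_words: "\<forall>(c, as)\<in>set L. set as \<subseteq> S \<Longrightarrow> \<forall>(c, as)\<in>set M. set as \<subseteq> S \<Longrightarrow>
   \<forall>(c, as)\<in>set (mulL L M). set as \<subseteq> S"
  by (fastforce simp: mulL_def)

section \<open>Commutation signs\<close>

lemma G_anti0: assumes "sq z" "sq y" "bf z y = 0" shows "G z * G y \<simeq> - (G y * G z)"
proof -
  have "G z * G y + G y * G z \<simeq> 0" using G_anti[OF assms(1,2)] assms(3) by simp
  then have "G z * G y + G y * G z - G y * G z \<simeq> 0 - G y * G z" by (rule cl_diff) simp
  then show ?thesis by simp
qed

lemma G_comm_fprod:
  assumes "sq z" "\<forall>b\<in>set as. sq (f b)"
    "\<forall>b\<in>set as. (bf z (f b) = 0 \<and> s b = -1) \<or> (f b = z \<and> s b = 1)"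
  shows "G z * fprod f as \<simeq> scal (\<Prod>b\<leftarrow>as. s b) * fprod f as * G z"
  using assms
proof (induction as)
  case Nil then show ?case by (simp add: scal_comm)
next
  case (Cons b as)
  have IH: "G z * fprod f as \<simeq> scal (\<Prod>b\<leftarrow>as. s b) * fprod f as * G z" using Cons by simp
  show ?case
  proof (cases "f b = z \<and> s b = 1")
    case True
    have "G z * fprod f (b # as) = G (f b) * (G z * fprod f as)" using True by (simp add: mult.assoc)
    also have "\<dots> \<simeq> G (f b) * (scal (\<Prod>b\<leftarrow>as. s b) * fprod f as * G z)" using IH by (rule cl_mull)
    also have "\<dots> = scal (\<Prod>b\<leftarrow>b # as. s b) * fprod f (b # as) * G z"
      using True by (simp add: mult.assoc) (metis mult.assoc scal_comm)
    finally show ?thesis .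
  next
    case False
    then have b: "bf z (f b) = 0" "s b = -1" using Cons.prems by auto
    have "G z * fprod f (b # as) = (G z * G (f b)) * fprod f as" by (simp add: mult.assoc)
    also have "\<dots> \<simeq> (- (G (f b) * G z)) * fprod f as"
      using G_anti0[OF Cons.prems(1) _ b(1)] Cons.prems by (intro cl_mulr) auto
    also have "\<dots> = - (G (f b) * (G z * fprod f as))" by (simp add: mult.assoc)
    also have "\<dots> \<simeq> - (G (f b) * (scal (\<Prod>b\<leftarrow>as. s b) * fprod f as * G z))"
      using IH by (intro cl_neg cl_mull)
    also have "\<dots> = scal (\<Prod>b\<leftarrow>b # as. s b) * fprod f (b # as) * G z"
      using b by (simp add: mult.assoc scal_uminus) (metis mult.assoc scal_comm)
    finally show ?thesis .
  qed
qed

lemma ON_sq: "ON n f \<Longrightarrow> a < n \<Longrightarrow> sq (f a)" by (simp add: ON_def)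
lemma ON_bf: "ON n f \<Longrightarrow> a < n \<Longrightarrow> b < n \<Longrightarrow> bf (f a) (f b) = (if a = b then 1 else 0)"
  by (simp add: ON_def)

definition sgn_at :: "nat \<Rightarrow> nat list \<Rightarrow> complex" where
  "sgn_at a as = (\<Prod>b\<leftarrow>as. if b = a then 1 else -1)"

lemma G_comm_fprod_f:
  assumes "ON n f" "a < n" "set as \<subseteq> {..<n}"
  shows "G (f a) * fprod f as \<simeq> scal (sgn_at a as) * fprod f as * G (f a)"
  unfolding sgn_at_def
proof (rule G_comm_fprod)
  show "sq (f a)" using assms ON_sq by auto
  show "\<forall>b\<in>set as. sq (f b)" using assms ON_sq by auto
  show "\<forall>b\<in>set as. bf (f a) (f b) = 0 \<and> (if b = a then 1 else - 1) = - 1 \<or>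
        f b = f a \<and> (if b = a then 1 else - 1) = 1"
    using assms ON_bf[OF assms(1)] by auto
qed

lemma G_comm_fprod_perp:
  assumes "ON n f" "sq z" "\<forall>b<n. bf z (f b) = 0" "set as \<subseteq> {..<n}"
  shows "G z * fprod f as \<simeq> scal ((-1) ^ length as) * fprod f as * G z"
proof -
  have "G z * fprod f as \<simeq> scal (\<Prod>b\<leftarrow>as. (\<lambda>_. -1) b) * fprod f as * G z"
    by (rule G_comm_fprod) (use assms ON_sq in auto)
  moreover have "(\<Prod>b\<leftarrow>as. (\<lambda>_. -1::complex) b) = (-1) ^ length as"
    by (induction as) auto
  ultimately show ?thesis by simp
qed

lemma G_comm_ev_perp:
  assumes "ON n f" "sq z" "\<forall>b<n. bf z (f b) = 0" "\<forall>(c, as)\<in>set L. set as \<subseteq> {..<n}"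
  shows "G z * ev f L \<simeq> ev f (map (\<lambda>(c, as). (c * (-1) ^ length as, as)) L) * G z"
  using assms(4)
proof (induction L)
  case Nil then show ?case by simp
next
  case (Cons cl L)
  obtain c as where cl: "cl = (c, as)" by force
  have w: "set as \<subseteq> {..<n}" using Cons cl by auto
  have "G z * ev f (cl # L) = scal c * (G z * fprod f as) + G z * ev f L"
    using cl by (simp add: algebra_simps) (metis mult.assoc scal_comm)
  also have "\<dots> \<simeq> scal c * (scal ((-1) ^ length as) * fprod f as * G z) + ev f (map (\<lambda>(c, as). (c * (-1) ^ length as, as)) L) * G z"
    using Cons w by (intro cl_add cl_mull G_comm_fprod_perp[OF assms(1-3)]) auto
  also have "\<dots> = ev f (map (\<lambda>(c, as). (c * (-1) ^ length as, as)) (cl # L)) * G z"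
    using cl by (simp add: algebra_simps flip: scal_mult)
  finally show ?case .
qed


section \<open>Averaging\<close>

lemma GG: assumes "ON n f" "a < n" shows "G (f a) * G (f a) \<simeq> 1"
  using G_sq[OF ON_sq[OF assms]] ON_bf[OF assms(1,2,2)] by simp

lemma conj_fprod: assumes "ON n f" "a < n" "set as \<subseteq> {..<n}"
  shows "G (f a) * fprod f as * G (f a) \<simeq> scal (sgn_at a as) * fprod f as"
proof -
  have "G (f a) * fprod f as * G (f a) \<simeq> scal (sgn_at a as) * fprod f as * G (f a) * G (f a)"
    using G_comm_fprod_f[OF assms] by (rule cl_mulr)
  also have "\<dots> = scal (sgn_at a as) * fprod f as * (G (f a) * G (f a))" by (simp add: mult.assoc)
  also have "\<dots> \<simeq> scal (sgn_at a as) * fprod f as * 1" using GG[OF assms(1,2)] by (rule cl_mull)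
  finally show ?thesis by simp
qed

lemma conj_ev: assumes "ON n f" "a < n" "\<forall>(c, as)\<in>set L. set as \<subseteq> {..<n}"
  shows "G (f a) * ev f L * G (f a) \<simeq> ev f (map (\<lambda>(c, as). (c * sgn_at a as, as)) L)"
  using assms(3)
proof (induction L)
  case Nil then show ?case by simp
next
  case (Cons cl L)
  obtain c as where cl: "cl = (c, as)" by force
  have w: "set as \<subseteq> {..<n}" using Cons cl by auto
  have "G (f a) * ev f (cl # L) * G (f a) = scal c * (G (f a) * fprod f as * G (f a)) + G (f a) * ev f L * G (f a)"
    using cl by (simp add: algebra_simps) (metis mult.assoc scal_comm)
  also have "\<dots> \<simeq> scal c * (scal (sgn_at a as) * fprod f as) + ev f (map (\<lambda>(c, as). (c * sgn_at a as, as)) L)"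
    using Cons w by (intro cl_add cl_mull conj_fprod[OF assms(1,2)]) auto
  also have "\<dots> = ev f (map (\<lambda>(c, as). (c * sgn_at a as, as)) (cl # L))"
    using cl by (simp flip: mult.assoc)
  finally show ?case .
qed

lemma ev_scale: "scal k * ev f L = ev f (map (\<lambda>(c, as). (k * c, as)) L)"
  by (induction L) (auto simp: algebra_simps mult.assoc[symmetric])

lemma ev_map_add: "ev f (map (\<lambda>(c, as). (c * g as, as)) L) + ev f (map (\<lambda>(c, as). (c * h as, as)) L)
   = ev f (map (\<lambda>(c, as). (c * (g as + h as), as)) L)"
  by (induction L) (auto simp: algebra_simps scal_add)

definition T :: "(nat \<Rightarrow> nat \<Rightarrow> complex) \<Rightarrow> nat \<Rightarrow> l2 freealg \<Rightarrow> l2 freealg" where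
  "T f a y = scal (1/2) * (y + G (f a) * y * G (f a))"

lemma T_cong: "y \<simeq> y' \<Longrightarrow> T f a y \<simeq> T f a y'"
  unfolding T_def by (intro cl_mull cl_add cl_mulr) auto

lemma T_fix: assumes "ON n f" "a < n" "y * G (f a) \<simeq> G (f a) * y"
  shows "T f a y \<simeq> y"
proof -
  have "G (f a) * y * G (f a) \<simeq> y * G (f a) * G (f a)"
    using cl_sym[OF assms(3)] by (rule cl_mulr)
  also have "\<dots> = y * (G (f a) * G (f a))" by (simp add: mult.assoc)
  also have "\<dots> \<simeq> y * 1" using GG[OF assms(1,2)] by (rule cl_mull)
  finally have "y + G (f a) * y * G (f a) \<simeq> y + y" by (intro cl_add) auto
  then have "T f a y \<simeq> scal (1/2) * (y + y)" unfolding T_def by (rule cl_mull)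
  also have "scal (1/2) * (y + y) = y"
  proof -
    have "scal (1/2) * (y + y) = (scal (1/2) + scal (1/2)) * y" by (simp add: algebra_simps)
    also have "\<dots> = y" by (simp flip: scal_add)
    finally show ?thesis .
  qed
  finally show ?thesis .
qed

lemma T_ev: assumes "ON n f" "a < n" "\<forall>(c, as)\<in>set L. set as \<subseteq> {..<n}"
  shows "T f a (ev f L) \<simeq> ev f (map (\<lambda>(c, as). (c * ((1 + sgn_at a as) / 2), as)) L)"
proof -
  have "T f a (ev f L) \<simeq> scal (1/2) * (ev f (map (\<lambda>(c, as). (c * 1, as)) L) + ev f (map (\<lambda>(c, as). (c * sgn_at a as, as)) L))"
    unfolding T_def using conj_ev[OF assms] by (intro cl_mull cl_add) (auto simp: case_prod_unfold)
  also have "\<dots> = scal (1/2) * ev f (map (\<lambda>(c, as). (c * (1 + sgn_at a as), as)) L)"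
    using ev_map_add[of f "\<lambda>_. 1" L "\<lambda>as. sgn_at a as"] by simp
  also have "\<dots> = ev f (map (\<lambda>(c, as). (c * ((1 + sgn_at a as) / 2), as)) L)"
    by (simp add: ev_scale case_prod_unfold comp_def)
  finally show ?thesis .
qed

lemma words_map: "\<forall>(c, as)\<in>set L. P as \<Longrightarrow> \<forall>(c, as)\<in>set (map (\<lambda>(c, as). (g c as, as)) L). P as"
  by auto

lemma averaging:
  assumes "ON n f" "\<forall>a<n. x * G (f a) \<simeq> G (f a) * x" "x \<simeq> ev f L"
    "\<forall>(c, as)\<in>set L. set as \<subseteq> {..<n}" "k \<le> n"
  shows "x \<simeq> ev f (map (\<lambda>(c, as). (c * (\<Prod>a<k. (1 + sgn_at a as) / 2), as)) L)"
  using assms(5)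
proof (induction k)
  case 0 then show ?case using assms(3) by (simp add: case_prod_unfold)
next
  case (Suc k)
  let ?L = "map (\<lambda>(c, as). (c * (\<Prod>a<k. (1 + sgn_at a as) / 2), as)) L"
  have kn: "k < n" using Suc by simp
  have wL: "\<forall>(c, as)\<in>set ?L. set as \<subseteq> {..<n}" by (rule words_map[OF assms(4)])
  have "x \<simeq> T f k x" by (rule cl_sym, rule T_fix[OF assms(1) kn]) (use assms(2) kn in auto)
  also have "\<dots> \<simeq> T f k (ev f ?L)" using Suc kn by (intro T_cong) auto
  also have "\<dots> \<simeq> ev f (map (\<lambda>(c, as). (c * ((1 + sgn_at k as) / 2), as)) ?L)"
    by (rule T_ev[OF assms(1) kn wL])
  also have "\<dots> = ev f (map (\<lambda>(c, as). (c * (\<Prod>a<Suc k. (1 + sgn_at a as) / 2), as)) L)"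
    by (simp add: case_prod_unfold comp_def algebra_simps)
  finally show ?case .
qed

lemma sgn_at_eq: "sgn_at a as = (-1) ^ length (filter (\<lambda>b. b \<noteq> a) as)"
  by (induction as) (auto simp: sgn_at_def)

lemma neg1_pow: "((-1::complex) ^ k) = (if even k then 1 else -1)"
  by (induction k) auto

lemma even_word:
  assumes "ON n f" "set as \<subseteq> {..<n}" "\<forall>a. even (length (filter (\<lambda>b. b = a) as))"
  shows "\<exists>d. fprod f as \<simeq> scal d"
  using assms(2,3)
proof (induction "length as" arbitrary: as rule: less_induct)
  case less
  show ?case
  proof (cases as)
    case Nil then show ?thesis by (intro exI[of _ 1]) simp
  next
    case (Cons b rest)
    have "odd (length (filter (\<lambda>x. x = b) rest))"
      using less.prems(2)[rule_format, of b] Cons by simp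
    then have "b \<in> set rest"
    proof (rule contrapos_pp)
      assume "b \<notin> set rest"
      then have "filter (\<lambda>x. x = b) rest = []" by (auto simp: filter_empty_conv)
      then show "\<not> odd (length (filter (\<lambda>x. x = b) rest))" by simp
    qed
    then obtain r1 r2 where rs: "rest = r1 @ b # r2" "b \<notin> set r1" by (meson split_list_first)
    have bn: "b < n" using less.prems(1) Cons by auto
    have w1: "set r1 \<subseteq> {..<n}" and w2: "set r2 \<subseteq> {..<n}" using less.prems(1) Cons rs by auto
    have "fprod f as = (G (f b) * fprod f r1) * G (f b) * fprod f r2"
      using Cons rs by (simp add: fprod_append mult.assoc)
    also have "\<dots> \<simeq> (scal (sgn_at b r1) * fprod f r1 * G (f b)) * G (f b) * fprod f r2"
      using G_comm_fprod_f[OF assms(1) bn w1] by (intro cl_mulr)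
    also have "\<dots> = scal (sgn_at b r1) * fprod f r1 * (G (f b) * G (f b)) * fprod f r2"
      by (simp add: mult.assoc)
    also have "\<dots> \<simeq> scal (sgn_at b r1) * fprod f r1 * 1 * fprod f r2"
      using GG[OF assms(1) bn] by (intro cl_mulr cl_mull)
    also have "\<dots> = scal (sgn_at b r1) * fprod f (r1 @ r2)" by (simp add: fprod_append mult.assoc)
    finally have eq: "fprod f as \<simeq> scal (sgn_at b r1) * fprod f (r1 @ r2)" .
    have "\<exists>d. fprod f (r1 @ r2) \<simeq> scal d"
    proof (rule less.hyps)
      show "length (r1 @ r2) < length as" using Cons rs by simp
      show "set (r1 @ r2) \<subseteq> {..<n}" using w1 w2 by auto
      show "\<forall>a. even (length (filter (\<lambda>x. x = a) (r1 @ r2)))"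
      proof
        fix a
        have "even (length (filter (\<lambda>x. x = a) as))" using less.prems(2) by blast
        then show "even (length (filter (\<lambda>x. x = a) (r1 @ r2)))"
          using Cons rs by (cases "a = b") auto
      qed
    qed
    then obtain d where "fprod f (r1 @ r2) \<simeq> scal d" by blast
    then have "fprod f as \<simeq> scal (sgn_at b r1) * scal d" using eq cl_trans cl_mull by blast
    then show ?thesis by (intro exI[of _ "sgn_at b r1 * d"]) simp
  qed
qed

lemma ev_scalar: "\<forall>(c, as)\<in>set L. \<exists>d. scal c * fprod f as \<simeq> scal d \<Longrightarrow> \<exists>d. ev f L \<simeq> scal d"
proof (induction L)
  case Nil then show ?case by (intro exI[of _ 0]) simp
next
  case (Cons cl L)
  obtain c as where cl: "cl = (c, as)" by force
  obtain d1 where d1: "scal c * fprod f as \<simeq> scal d1" using Cons cl by auto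
  obtain d2 where d2: "ev f L \<simeq> scal d2" using Cons by auto
  have "ev f (cl # L) \<simeq> scal d1 + scal d2" using cl d1 d2 by (simp add: cl_add)
  then show ?case by (intro exI[of _ "d1 + d2"]) (simp add: scal_add)
qed

lemma central_even_scalar:
  assumes "ON n f" "\<forall>a<n. x * G (f a) \<simeq> G (f a) * x" "x \<simeq> ev f L"
    "\<forall>(c, as)\<in>set L. set as \<subseteq> {..<n} \<and> even (length as)"
  shows "\<exists>d. x \<simeq> scal d"
proof -
  have "x \<simeq> ev f (map (\<lambda>(c, as). (c * (\<Prod>a<n. (1 + sgn_at a as) / 2), as)) L)"
    using averaging[OF assms(1-3), of n] assms(4) by auto
  moreover have "\<exists>d. ev f (map (\<lambda>(c, as). (c * (\<Prod>a<n. (1 + sgn_at a as) / 2), as)) L) \<simeq> scal d"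
  proof (rule ev_scalar, clarsimp)
    fix c as assume "(c, as) \<in> set L"
    then have w: "set as \<subseteq> {..<n}" "even (length as)" using assms(4) by auto
    show "\<exists>d. scal (c * (\<Prod>a<n. (1 + sgn_at a as) / 2)) * fprod f as \<simeq> scal d"
    proof (cases "\<forall>a<n. sgn_at a as = 1")
      case True
      have "\<forall>a. even (length (filter (\<lambda>b. b = a) as))"
      proof
        fix a
        show "even (length (filter (\<lambda>b. b = a) as))"
        proof (cases "a < n")
          case True
          then have "even (length (filter (\<lambda>b. b \<noteq> a) as))"
            using \<open>\<forall>a<n. sgn_at a as = 1\<close> by (auto simp: sgn_at_eq neg1_pow split: if_splits)
          moreover have "length (filter (\<lambda>b. b = a) as) + length (filter (\<lambda>b. b \<noteq> a) as) = length as"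
            using sum_length_filter_compl[of "\<lambda>b. b = a" as] by simp
          ultimately show ?thesis using w(2) by presburger
        next
          case False
          then have "filter (\<lambda>b. b = a) as = []" using w(1) by (auto simp: filter_empty_conv)
          then show ?thesis by simp
        qed
      qed
      then obtain d where "fprod f as \<simeq> scal d" using even_word[OF assms(1) w(1)] by blast
      then have "scal (c * (\<Prod>a<n. (1 + sgn_at a as) / 2)) * fprod f as \<simeq> scal (c * (\<Prod>a<n. (1 + sgn_at a as) / 2)) * scal d"
        by (rule cl_mull)
      then show ?thesis by (intro exI[of _ "c * (\<Prod>a<n. (1 + sgn_at a as) / 2) * d"]) simp
    next
      case False
      then obtain a where a: "a < n" "sgn_at a as \<noteq> 1" by auto
      then have "sgn_at a as = -1" by (auto simp: sgn_at_eq neg1_pow split: if_splits)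
      then have z: "(\<Prod>a<n. (1 + sgn_at a as) / 2) = 0" using a(1)
        by (intro prod_zero bexI[of _ a]) auto
      show ?thesis by (intro exI[of _ 0]) (simp only: z mult_zero_right scal_0 mult_zero_left cl_refl)
    qed
  qed
  ultimately show ?thesis using cl_trans by blast
qed



definition fs :: "(nat \<Rightarrow> complex) \<Rightarrow> bool" where
  "fs x \<longleftrightarrow> (\<exists>K. \<forall>i\<ge>K. x i = 0)"

definition Inv :: "nat \<Rightarrow> (nat \<Rightarrow> nat \<Rightarrow> complex) \<Rightarrow> (nat \<Rightarrow> nat \<Rightarrow> complex) \<Rightarrow> bool" where
  "Inv n f v \<longleftrightarrow> ON n f \<and> (\<forall>a<n. fs (v a)) \<and> (\<forall>a<n. \<forall>b<n. bf (v a) (f b) = (if a = b then 1 else 0))"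

definition inspan :: "nat \<Rightarrow> (nat \<Rightarrow> nat \<Rightarrow> complex) \<Rightarrow> (nat \<Rightarrow> complex) \<Rightarrow> bool" where
  "inspan n f w \<longleftrightarrow> (\<exists>d. w = (\<lambda>i. \<Sum>a<n. d a * f a i))"

lemma fs_sq: "fs x \<Longrightarrow> sq x" unfolding fs_def using sq_finsupp by blast

lemma fs_dl: "fs (dl i)" unfolding fs_def dl_def by (intro exI[of _ "Suc i"]) auto

lemma fs_add: assumes "fs x" "fs y" shows "fs (\<lambda>i. x i + y i)"
proof -
  obtain K1 K2 where "\<forall>i\<ge>K1. x i = 0" "\<forall>i\<ge>K2. y i = 0" using assms unfolding fs_def by blast
  then show ?thesis unfolding fs_def by (intro exI[of _ "max K1 K2"]) auto
qed

lemma fs_scale: "fs x \<Longrightarrow> fs (\<lambda>i. c * x i)" unfolding fs_def by auto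

lemma fs_diff: "fs x \<Longrightarrow> fs y \<Longrightarrow> fs (\<lambda>i. x i - y i)"
  using fs_add[of x "\<lambda>i. - y i"] fs_scale[of y "-1"] by simp

lemma fs_lincomb: "finite A \<Longrightarrow> (\<And>a. a \<in> A \<Longrightarrow> fs (g a)) \<Longrightarrow> fs (\<lambda>i. \<Sum>a\<in>A. c a * g a i)"
proof (induction A rule: finite_induct)
  case empty then show ?case by (simp add: fs_def)
next
  case (insert a A)
  then have "fs (\<lambda>i. c a * g a i + (\<Sum>a\<in>A. c a * g a i))" by (intro fs_add fs_scale) auto
  then show ?case using insert by simp
qed

lemma Inv_ON: "Inv n f v \<Longrightarrow> ON n f" by (simp add: Inv_def)
lemma Inv_fs: "Inv n f v \<Longrightarrow> a < n \<Longrightarrow> fs (v a)" by (simp add: Inv_def)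
lemma Inv_sqv: "Inv n f v \<Longrightarrow> a < n \<Longrightarrow> sq (v a)" by (simp add: Inv_def fs_sq)
lemma Inv_sqf: "Inv n f v \<Longrightarrow> a < n \<Longrightarrow> sq (f a)" by (simp add: Inv_def ON_def)
lemma Inv_bfv: "Inv n f v \<Longrightarrow> a < n \<Longrightarrow> b < n \<Longrightarrow> bf (v a) (f b) = (if a = b then 1 else 0)"
  by (simp add: Inv_def)
lemma Inv_bff: "Inv n f v \<Longrightarrow> a < n \<Longrightarrow> b < n \<Longrightarrow> bf (f a) (f b) = (if a = b then 1 else 0)"
  by (simp add: Inv_def ON_def)

lemma sum_delta1: "(b::nat) < n \<Longrightarrow> (\<Sum>a<n. c a * (if a = b then 1 else 0)) = (c b :: complex)"
proof -
  assume b: "b < n"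
  have "(\<Sum>a<n. c a * (if a = b then 1 else 0)) = (\<Sum>a<n. if a = b then c a else 0)"
    by (rule sum.cong) auto
  also have "\<dots> = c b" using b by (subst sum.delta) auto
  finally show ?thesis .
qed
lemma sum_delta2: "(b::nat) < n \<Longrightarrow> (\<Sum>a<n. c a * (if b = a then 1 else 0)) = (c b :: complex)"
  using sum_delta1[of b n c] by (simp add: eq_commute[of b])

lemma bf_sub_scaled: assumes "sq x" "sq y" "sq z"
  shows "bf (\<lambda>j. x j - k * y j) z = bf x z - k * bf y z"
  using bf_diff_left[OF assms(1) sq_scale[OF assms(2)] assms(3)] bf_scale_left[OF assms(2,3)] by simp

lemma bf_self_add: assumes "sq x" "sq y"
  shows "bf (\<lambda>i. x i + c * y i) (\<lambda>i. x i + c * y i) = bf x x + 2 * c * bf x y + c * c * bf y y"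
proof -
  have s: "sq (\<lambda>i. c * y i)" using sq_scale[OF assms(2)] .
  have s2: "sq (\<lambda>i. x i + c * y i)" using sq_add[OF assms(1) s] .
  have "bf (\<lambda>i. x i + c * y i) (\<lambda>i. x i + c * y i) = bf x (\<lambda>i. x i + c * y i) + c * bf y (\<lambda>i. x i + c * y i)"
    using bf_add_left[OF assms(1) s s2] bf_scale_left[OF assms(2) s2] by simp
  also have "\<dots> = bf x x + c * bf x y + c * (bf y x + c * bf y y)"
    using bf_add_right[OF assms(1) s] bf_add_right[OF assms(1) s assms(2)] bf_scale_right assms s
    by (simp add: bf_add_right bf_scale_right)
  finally show ?thesis by (simp add: bf_comm[of y x] algebra_simps)
qed

lemma find_dual:
  assumes Inv: "Inv n f v" and u: "sq u" "u \<noteq> (\<lambda>i. 0)" "\<forall>a<n. bf u (f a) = 0"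
  shows "\<exists>v0. fs v0 \<and> (\<forall>a<n. bf v0 (f a) = 0) \<and> bf v0 u \<noteq> 0"
proof -
  define c where "c a = bf (v a) u" for a
  define r where "r = (\<lambda>i. u i - (\<Sum>a<n. c a * f a i))"
  have "\<exists>i. r i \<noteq> 0"
  proof (rule ccontr)
    assume "\<not> (\<exists>i. r i \<noteq> 0)"
    then have ueq: "u = (\<lambda>i. \<Sum>a<n. c a * f a i)" by (auto simp: r_def fun_eq_iff)
    have cz: "c b = 0" if b: "b < n" for b
    proof -
      have "bf u (f b) = (\<Sum>a<n. c a * bf (f a) (f b))"
        by (subst ueq, rule bf_lincomb_left) (use Inv b in \<open>auto intro: Inv_sqf\<close>)
      also have "\<dots> = (\<Sum>a<n. c a * (if a = b then 1 else 0))"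
        using Inv_bff[OF Inv _ b] by (intro sum.cong) auto
      also have "\<dots> = c b" using b by (rule sum_delta1)
      finally show ?thesis using u(3) b by simp
    qed
    have "u = (\<lambda>i. 0)" by (subst ueq) (simp add: cz)
    with u(2) show False by simp
  qed
  then obtain i where ri: "r i \<noteq> 0" by blast
  define v0 where "v0 = (\<lambda>j. dl i j - (\<Sum>a<n. f a i * v a j))"
  have fsv0: "fs v0" unfolding v0_def
    by (intro fs_diff fs_dl fs_lincomb) (auto intro: Inv_fs[OF Inv])
  have sqL: "sq (\<lambda>j. \<Sum>a<n. f a i * v a j)" by (intro sq_lincomb) (auto intro: Inv_sqv[OF Inv])
  have bfv0: "bf v0 z = z i - (\<Sum>a<n. f a i * bf (v a) z)" if z: "sq z" for z
  proof -
    have "bf v0 z = bf (dl i) z - bf (\<lambda>j. \<Sum>a<n. f a i * v a j) z"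
      unfolding v0_def by (rule bf_diff_left[OF sq_dl sqL z])
    also have "bf (\<lambda>j. \<Sum>a<n. f a i * v a j) z = (\<Sum>a<n. f a i * bf (v a) z)"
      by (rule bf_lincomb_left) (use z in \<open>auto intro: Inv_sqv[OF Inv]\<close>)
    finally show ?thesis by (simp add: bf_dl)
  qed
  have "\<forall>b<n. bf v0 (f b) = 0"
  proof (intro allI impI)
    fix b assume b: "b < n"
    have "(\<Sum>a<n. f a i * bf (v a) (f b)) = (\<Sum>a<n. f a i * (if a = b then 1 else 0))"
      by (rule sum.cong) (auto simp: Inv_bfv[OF Inv _ b])
    then have "bf v0 (f b) = f b i - (\<Sum>a<n. f a i * (if a = b then 1 else 0))"
      using bfv0[OF Inv_sqf[OF Inv b]] by simp
    then show "bf v0 (f b) = 0" using sum_delta1[OF b] by simp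
  qed
  moreover have "bf v0 u = r i" using bfv0[OF u(1)] by (simp add: r_def c_def mult.commute)
  ultimately show ?thesis using fsv0 ri by (intro exI[of _ v0]) auto
qed


lemma bf_zero_left: "bf (\<lambda>i. 0) z = 0" by (simp add: bf_def)

lemma add_noniso:
  assumes Inv: "Inv n f v" and u: "sq u" "\<forall>a<n. bf u (f a) = 0" "bf u u \<noteq> 0"
  shows "\<exists>f' v'. Inv (Suc n) f' v' \<and> (\<forall>a<n. f' a = f a) \<and> (\<exists>s. u = (\<lambda>i. s * f' n i))"
proof -
  have u0: "u \<noteq> (\<lambda>i. 0)" using u(3) bf_zero_left by auto
  obtain v0 where v0: "fs v0" "\<forall>a<n. bf v0 (f a) = 0" "bf v0 u \<noteq> 0"
    using find_dual[OF Inv u(1) u0 u(2)] by blast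
  have sqv0: "sq v0" using v0(1) by (rule fs_sq)
  define \<beta> where "\<beta> = bf v0 u"
  define s where "s = csqrt (bf u u)"
  have ss: "s * s = bf u u" unfolding s_def by (metis power2_csqrt power2_eq_square)
  have s0: "s \<noteq> 0" using ss u(3) by auto
  have b0: "\<beta> \<noteq> 0" using v0(3) by (simp add: \<beta>_def)
  define g where "g = (\<lambda>i. (1/s) * u i)"
  define vn where "vn = (\<lambda>j. (s/\<beta>) * v0 j)"
  define f' where "f' = f(n := g)"
  define v' where "v' = (\<lambda>a. if a = n then vn else (\<lambda>j. v a j - bf (v a) g * vn j))"
  have sqg: "sq g" unfolding g_def by (rule sq_scale[OF u(1)])
  have fsvn: "fs vn" unfolding vn_def by (rule fs_scale[OF v0(1)])
  have sqvn: "sq vn" using fsvn by (rule fs_sq)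
  have bfgg: "bf g g = 1"
  proof -
    have 1: "bf g g = (1/s) * bf u g"
      using bf_scale_left[OF u(1) sqg, of "1/s"] by (simp only: g_def[symmetric])
    have 2: "bf u g = (1/s) * bf u u"
      using bf_scale_right[OF u(1) u(1), of "1/s"] by (simp only: g_def[symmetric])
    show ?thesis using 1 2 ss s0 u(3) by (simp add: field_simps)
  qed
  have bfgf: "bf g (f a) = 0" if "a < n" for a
  proof -
    have "bf g (f a) = (1/s) * bf u (f a)"
      using bf_scale_left[OF u(1) Inv_sqf[OF Inv that], of "1/s"] by (simp only: g_def[symmetric])
    then show ?thesis using u(2) that by simp
  qed
  have bffg: "bf (f a) g = 0" if "a < n" for a using bfgf[OF that] by (simp add: bf_comm)
  have bfvng: "bf vn g = 1"
  proof -
    have 1: "bf vn g = (s/\<beta>) * bf v0 g"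
      using bf_scale_left[OF sqv0 sqg, of "s/\<beta>"] by (simp only: vn_def[symmetric])
    have 2: "bf v0 g = (1/s) * \<beta>"
      using bf_scale_right[OF u(1) sqv0, of "1/s"] by (simp only: g_def[symmetric] \<beta>_def)
    show ?thesis using 1 2 s0 b0 by (simp add: field_simps)
  qed
  have bfvnf: "bf vn (f a) = 0" if "a < n" for a
  proof -
    have "bf vn (f a) = (s/\<beta>) * bf v0 (f a)"
      using bf_scale_left[OF sqv0 Inv_sqf[OF Inv that], of "s/\<beta>"] by (simp only: vn_def[symmetric])
    then show ?thesis using v0(2) that by simp
  qed
  have ON': "ON (Suc n) f'" unfolding ON_def
  proof (intro conjI allI impI)
    fix a assume "a < Suc n" then show "sq (f' a)"
      by (cases "a = n") (auto simp: f'_def sqg Inv_sqf[OF Inv])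
  next
    fix a b assume ab: "a < Suc n" "b < Suc n"
    show "bf (f' a) (f' b) = (if a = b then 1 else 0)"
      using ab by (cases "a = n"; cases "b = n") (auto simp: f'_def bfgg bfgf bffg Inv_bff[OF Inv])
  qed
  have fs': "\<forall>a<Suc n. fs (v' a)"
    by (auto simp: v'_def fsvn intro!: fs_diff fs_scale Inv_fs[OF Inv])
  have bfv': "bf (v' a) (f' b) = (if a = b then 1 else 0)" if ab: "a < Suc n" "b < Suc n" for a b
  proof (cases "a = n")
    case True
    then show ?thesis using ab by (cases "b = n") (auto simp: v'_def f'_def bfvng bfvnf)
  next
    case False
    then have a: "a < n" using ab by simp
    have e: "bf (v' a) z = bf (v a) z - bf (v a) g * bf vn z" if "sq z" for z
      unfolding v'_def using False bf_sub_scaled[OF Inv_sqv[OF Inv a] sqvn that] by simp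
    show ?thesis
    proof (cases "b = n")
      case True
      then show ?thesis using e[OF sqg] False by (simp add: f'_def bfvng)
    next
      case False
      then have b: "b < n" using ab by simp
      then show ?thesis using e[OF Inv_sqf[OF Inv b]] False by (simp add: f'_def bfvnf Inv_bfv[OF Inv a b])
    qed
  qed
  have "Inv (Suc n) f' v'" unfolding Inv_def using ON' fs' bfv' by blast
  moreover have "\<forall>a<n. f' a = f a" by (simp add: f'_def)
  moreover have "u = (\<lambda>i. s * f' n i)" using s0 by (simp add: f'_def g_def)
  ultimately show ?thesis by blast
qed


lemma bf_add_scaled: assumes "sq x" "sq y" "sq z"
  shows "bf (\<lambda>j. x j + k * y j) z = bf x z + k * bf y z"
  using bf_add_left[OF assms(1) sq_scale[OF assms(2)] assms(3)] bf_scale_left[OF assms(2,3)] by simp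

lemma span_ext:
  assumes "w = (\<lambda>i. P i + w' i)" "P = (\<lambda>i. \<Sum>a<n. d a * f a i)"
    "w' = (\<lambda>i. \<Sum>a<m. e a * f' a i)" "n \<le> m" "\<forall>a<n. f' a = f a"
  shows "inspan m f' w"
proof -
  define d' where "d' a = (if a < n then d a else 0) + e a" for a
  have "(\<Sum>a<m. d' a * f' a i) = P i + w' i" for i
  proof -
    have "(\<Sum>a<m. d' a * f' a i) = (\<Sum>a<m. (if a < n then d a * f a i else 0) + e a * f' a i)"
      by (rule sum.cong) (auto simp: d'_def assms(5) distrib_right)
    also have "\<dots> = (\<Sum>a<m. if a < n then d a * f a i else 0) + (\<Sum>a<m. e a * f' a i)"
      by (rule sum.distrib)
    also have "(\<Sum>a<m. if a < n then d a * f a i else 0) = (\<Sum>a\<in>{x\<in>{..<m}. x < n}. d a * f a i)"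
      by (rule sum.inter_filter[symmetric]) simp
    also have "{x\<in>{..<m}. x < n} = {..<n}" using assms(4) by auto
    finally show ?thesis using assms(2,3) by simp
  qed
  then show ?thesis unfolding inspan_def using assms(1) by (intro exI[of _ d']) auto
qed

lemma add_any:
  assumes Inv: "Inv n f v" and w: "sq w"
  shows "\<exists>n' f' v'. n \<le> n' \<and> Inv n' f' v' \<and> (\<forall>a<n. f' a = f a) \<and> inspan n' f' w"
proof -
  define P where "P = (\<lambda>i. \<Sum>a<n. bf w (f a) * f a i)"
  define w' where "w' = (\<lambda>i. w i - P i)"
  have sqP: "sq P" unfolding P_def by (intro sq_lincomb) (auto intro: Inv_sqf[OF Inv])
  have sqw': "sq w'" unfolding w'_def by (rule sq_diff[OF w sqP])
  have wP: "w = (\<lambda>i. P i + w' i)" by (simp add: w'_def)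
  have perp: "bf w' (f b) = 0" if b: "b < n" for b
  proof -
    have "bf P (f b) = (\<Sum>a<n. bf w (f a) * bf (f a) (f b))"
      unfolding P_def by (rule bf_lincomb_left) (auto intro: Inv_sqf[OF Inv] b)
    also have "\<dots> = (\<Sum>a<n. bf w (f a) * (if a = b then 1 else 0))"
      by (rule sum.cong) (auto simp: Inv_bff[OF Inv _ b])
    also have "\<dots> = bf w (f b)" by (rule sum_delta1[OF b])
    finally have "bf P (f b) = bf w (f b)" .
    then show ?thesis unfolding w'_def using bf_diff_left[OF w sqP Inv_sqf[OF Inv b]] by simp
  qed
  show ?thesis
  proof (cases "w' = (\<lambda>i. 0)")
    case True
    have "inspan n f w"
      by (rule span_ext[OF wP P_def, where m = n and e = "\<lambda>_. 0"]) (use True in auto)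
    then show ?thesis using Inv by blast
  next
    case nz: False
    show ?thesis
    proof (cases "bf w' w' = 0")
      case False
      obtain f1 v1 s where f1: "Inv (Suc n) f1 v1" "\<forall>a<n. f1 a = f a" "w' = (\<lambda>i. s * f1 n i)"
        using add_noniso[OF Inv sqw' _ False] perp by blast
      have "inspan (Suc n) f1 w"
        by (rule span_ext[OF wP P_def, where m = "Suc n" and e = "\<lambda>a. if a = n then s else 0"]) (use f1 in auto)
      then show ?thesis using f1 by (intro exI[of _ "Suc n"] exI[of _ f1] exI[of _ v1]) auto
    next
      case iso: True
      obtain v0 where v0: "fs v0" "\<forall>a<n. bf v0 (f a) = 0" "bf v0 w' \<noteq> 0"
        using find_dual[OF Inv sqw' nz] perp by blast
      have sqv0: "sq v0" using v0(1) by (rule fs_sq)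
      define \<beta> where "\<beta> = bf v0 w'"
      have b0: "\<beta> \<noteq> 0" using v0(3) by (simp add: \<beta>_def)
      define c :: complex where "c = (if 2 * \<beta> + bf v0 v0 \<noteq> 0 then 1 else 2)"
      have c0: "c \<noteq> 0" by (simp add: c_def)
      have cq: "2 * \<beta> + c * bf v0 v0 \<noteq> 0"
      proof (cases "2 * \<beta> + bf v0 v0 \<noteq> 0")
        case True then show ?thesis by (simp add: c_def)
      next
        case False
        then have h: "bf v0 v0 + 2 * \<beta> = 0" by (simp add: add.commute)
        have "bf v0 v0 = - (2 * \<beta>)" using h by (simp only: eq_neg_iff_add_eq_0)
        then show ?thesis using b0 by (simp add: c_def)
      qed
      define y where "y = (\<lambda>i. w' i + c * v0 i)"
      have sqy: "sq y" unfolding y_def by (rule sq_add[OF sqw' sq_scale[OF sqv0]])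
      have yy: "bf y y = c * (2 * \<beta> + c * bf v0 v0)"
        unfolding y_def using bf_self_add[OF sqw' sqv0, of c] iso
        by (simp add: \<beta>_def bf_comm[of w' v0] algebra_simps)
      have yy0: "bf y y \<noteq> 0" using yy c0 cq by simp
      have yperp: "\<forall>a<n. bf y (f a) = 0"
        unfolding y_def using bf_add_scaled[OF sqw' sqv0 Inv_sqf[OF Inv]] perp v0(2) by simp
      obtain f1 v1 where f1': "Inv (Suc n) f1 v1 \<and> (\<forall>a<n. f1 a = f a) \<and> (\<exists>s. y = (\<lambda>i. s * f1 n i))"
        using add_noniso[OF Inv sqy yperp yy0] by (elim exE) (rule that)
      obtain s1 where f1: "Inv (Suc n) f1 v1" "\<forall>a<n. f1 a = f a" "y = (\<lambda>i. s1 * f1 n i)"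
        using f1' by (elim conjE exE) (rule that)
      have sqf1n: "sq (f1 n)" using Inv_sqf[OF f1(1)] by simp
      define t where "t = bf w' (f1 n)"
      have wy: "bf w' y = c * \<beta>"
      proof -
        have "bf y w' = bf w' w' + c * bf v0 w'"
          unfolding y_def by (rule bf_add_scaled[OF sqw' sqv0 sqw'])
        then show ?thesis using iso by (simp add: bf_comm[of w' y] \<beta>_def)
      qed
      have "bf w' y = s1 * t"
        unfolding t_def f1(3) using bf_scale_right[OF sqf1n sqw', of s1] .
      then have t0: "t \<noteq> 0" using wy c0 b0 by auto
      define w'' where "w'' = (\<lambda>i. w' i + (- t) * f1 n i)"
      have sqw'': "sq w''" unfolding w''_def by (rule sq_add[OF sqw' sq_scale[OF sqf1n]])
      have bf11: "bf (f1 n) (f1 n) = 1" using Inv_bff[OF f1(1), of n n] by simp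
      have w''w'': "bf w'' w'' = - (t * t)"
        unfolding w''_def using bf_self_add[OF sqw' sqf1n, of "- t"] iso bf11
        by (simp add: t_def algebra_simps)
      have w''0: "bf w'' w'' \<noteq> 0" using w''w'' t0 by simp
      have w''perp: "\<forall>a<Suc n. bf w'' (f1 a) = 0"
      proof (intro allI impI)
        fix a assume a: "a < Suc n"
        have e: "bf w'' (f1 a) = bf w' (f1 a) + (- t) * bf (f1 n) (f1 a)"
          unfolding w''_def by (rule bf_add_scaled[OF sqw' sqf1n Inv_sqf[OF f1(1) a]])
        show "bf w'' (f1 a) = 0"
        proof (cases "a = n")
          case True then show ?thesis using e bf11 by (simp add: t_def)
        next
          case False
          then have "a < n" using a by simp
          then show ?thesis using e perp f1(2) Inv_bff[OF f1(1), of n a] False by simp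
        qed
      qed
      obtain f2 v2 where f2': "Inv (Suc (Suc n)) f2 v2 \<and> (\<forall>a<Suc n. f2 a = f1 a) \<and> (\<exists>s. w'' = (\<lambda>i. s * f2 (Suc n) i))"
        using add_noniso[OF f1(1) sqw'' w''perp w''0] by (elim exE) (rule that)
      obtain s2 where f2: "Inv (Suc (Suc n)) f2 v2" "\<forall>a<Suc n. f2 a = f1 a" "w'' = (\<lambda>i. s2 * f2 (Suc n) i)"
        using f2' by (elim conjE exE) (rule that)
      have "w' = (\<lambda>i. w'' i + t * f1 n i)" by (simp add: w''_def)
      then have w'e: "w' = (\<lambda>i. \<Sum>a<Suc (Suc n). (if a = n then t else if a = Suc n then s2 else 0) * f2 a i)"
        using f2(2,3) by (simp add: algebra_simps)
      have "inspan (Suc (Suc n)) f2 w"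
        by (rule span_ext[OF wP P_def w'e]) (use f1(2) f2(2) in auto)
      then show ?thesis using f2 f1 by (intro exI[of _ "Suc (Suc n)"] exI[of _ f2] exI[of _ v2]) auto
    qed
  qed
qed


lemma inspan_mono: assumes "inspan n f w" "n \<le> m" "\<forall>a<n. f' a = f a" shows "inspan m f' w"
proof -
  obtain d where d: "w = (\<lambda>i. \<Sum>a<n. d a * f a i)" using assms(1) unfolding inspan_def by blast
  show ?thesis
    by (rule span_ext[where P = w and w' = "\<lambda>i. 0" and e = "\<lambda>_. 0", OF _ d _ assms(2,3)]) auto
qed

lemma gs_list: "\<forall>w\<in>set ws. sq w \<Longrightarrow> \<exists>n f v. Inv n f v \<and> (\<forall>w\<in>set ws. inspan n f w)"
proof (induction ws)
  case Nil
  have "Inv 0 (\<lambda>_ _. 0) (\<lambda>_ _. 0)" by (simp add: Inv_def ON_def)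
  then show ?case by auto
next
  case (Cons w ws)
  then obtain n f v where nfv: "Inv n f v" "\<forall>w\<in>set ws. inspan n f w" by auto
  obtain n' f' v' where H: "n \<le> n' \<and> Inv n' f' v' \<and> (\<forall>a<n. f' a = f a) \<and> inspan n' f' w"
    using add_any[OF nfv(1), of w] Cons.prems by (auto intro: that)
  have "\<forall>x\<in>set (w # ws). inspan n' f' x" using H nfv(2) inspan_mono by auto
  then show ?case using H by blast
qed

lemma sq_to_0: assumes "sq x" shows "x \<longlonglongrightarrow> 0"
proof -
  have "(\<lambda>i. (cmod (x i))^2) \<longlonglongrightarrow> 0" using assms unfolding sq_def by (rule summable_LIMSEQ_zero)
  then have "(\<lambda>i. sqrt ((cmod (x i))^2)) \<longlonglongrightarrow> sqrt 0" by (rule tendsto_real_sqrt)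
  then have "(\<lambda>i. norm (x i)) \<longlonglongrightarrow> 0" by simp
  then show ?thesis by (simp add: tendsto_norm_zero_iff)
qed

lemma exists_z:
  assumes Inv: "Inv n f v"
  shows "\<exists>z. fs z \<and> (\<forall>a<n. bf z (f a) = 0) \<and> bf z z \<noteq> 0"
proof -
  have "\<forall>a<n. \<exists>K. \<forall>i\<ge>K. v a i = 0" using Inv_fs[OF Inv] unfolding fs_def by blast
  then obtain Kf where Kf: "\<forall>a<n. \<forall>i\<ge>Kf a. v a i = 0" by metis
  define K where "K = (\<Sum>a<n. Kf a)"
  have vK: "v a i = 0" if "a < n" "i \<ge> K" for a i
  proof -
    have "Kf a \<le> K" unfolding K_def using that(1) by (intro member_le_sum) auto
    then show ?thesis using Kf that by auto
  qed
  define M where "M a b = bf (v a) (v b)" for a b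
  define h where "h i = (\<Sum>a<n. \<Sum>b<n. f a i * f b i * M a b)" for i
  have "h \<longlonglongrightarrow> 0" unfolding h_def
    by (intro tendsto_null_sum tendsto_mult_left_zero tendsto_mult_zero sq_to_0 Inv_sqf[OF Inv]) auto
  then have "eventually (\<lambda>i. dist (h i) 0 < 1) sequentially" by (rule tendstoD) simp
  moreover have "eventually (\<lambda>i. i \<ge> K) sequentially" by (rule eventually_ge_at_top)
  ultimately have "eventually (\<lambda>i. dist (h i) 0 < 1 \<and> i \<ge> K) sequentially" by (rule eventually_conj)
  then obtain i where i: "norm (h i) < 1" "i \<ge> K" using eventually_sequentially by auto
  define V where "V = (\<lambda>j. \<Sum>a<n. f a i * v a j)"
  define z where "z = (\<lambda>j. dl i j - V j)"
  have sqV: "sq V" unfolding V_def by (intro sq_lincomb) (auto intro: Inv_sqv[OF Inv])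
  have sqz: "sq z" unfolding z_def by (rule sq_diff[OF sq_dl sqV])
  have fsz: "fs z" unfolding z_def V_def
    by (intro fs_diff fs_dl fs_lincomb) (auto intro: Inv_fs[OF Inv])
  have bfz: "bf z y = y i - (\<Sum>a<n. f a i * bf (v a) y)" if y: "sq y" for y
  proof -
    have "bf z y = bf (dl i) y - bf V y" unfolding z_def by (rule bf_diff_left[OF sq_dl sqV y])
    also have "bf V y = (\<Sum>a<n. f a i * bf (v a) y)"
      unfolding V_def by (rule bf_lincomb_left) (use y in \<open>auto intro: Inv_sqv[OF Inv]\<close>)
    finally show ?thesis by (simp add: bf_dl)
  qed
  have perp: "\<forall>b<n. bf z (f b) = 0"
  proof (intro allI impI)
    fix b assume b: "b < n"
    have "(\<Sum>a<n. f a i * bf (v a) (f b)) = (\<Sum>a<n. f a i * (if a = b then 1 else 0))"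
      by (rule sum.cong) (auto simp: Inv_bfv[OF Inv _ b])
    then show "bf z (f b) = 0" using bfz[OF Inv_sqf[OF Inv b]] sum_delta1[OF b] by simp
  qed
  have zi: "z i = 1"
  proof -
    have "V i = 0" unfolding V_def using vK i(2) by simp
    then show ?thesis by (simp add: z_def dl_def)
  qed
  have vz: "bf (v a) z = - (\<Sum>b<n. f b i * M a b)" if a: "a < n" for a
  proof -
    have "bf (v a) z = bf z (v a)" by (rule bf_comm)
    also have "\<dots> = v a i - (\<Sum>b<n. f b i * bf (v b) (v a))" by (rule bfz[OF Inv_sqv[OF Inv a]])
    also have "v a i = 0" using vK a i(2) by simp
    finally show ?thesis by (simp add: M_def bf_comm[of "v a"])
  qed
  have "bf z z = 1 + h i"
  proof -
    have "bf z z = z i - (\<Sum>a<n. f a i * bf (v a) z)" by (rule bfz[OF sqz])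
    also have "(\<Sum>a<n. f a i * bf (v a) z) = (\<Sum>a<n. f a i * (- (\<Sum>b<n. f b i * M a b)))"
      by (rule sum.cong) (auto simp: vz)
    also have "\<dots> = - h i" unfolding h_def
      by (simp add: sum_distrib_left sum_negf algebra_simps)
    finally show ?thesis using zi by simp
  qed
  moreover have "1 + h i \<noteq> 0"
  proof
    assume "1 + h i = 0"
    then have "h i = -1" by (simp add: add_eq_0_iff)
    then show False using i(1) by simp
  qed
  ultimately show ?thesis using fsz perp by (intro exI[of _ z]) auto
qed



lemma gen_unitv: "gen (unitv i) = G (dl i)"
  by (simp add: unitv_def G_def dl_def)

lemma comm_fs:
  assumes H: "\<forall>i. p * G (dl i) \<simeq> G (dl i) * p" and z: "fs z"
  shows "p * G z \<simeq> G z * p"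
proof -
  obtain K where K: "\<forall>i\<ge>K. z i = 0" using z unfolding fs_def by blast
  have ze: "z = (\<lambda>j. \<Sum>i<K. z i * dl i j)"
  proof
    fix j
    have "(\<Sum>i<K. z i * dl i j) = (\<Sum>i<K. if i = j then z i else 0)"
      by (rule sum.cong) (auto simp: dl_def)
    also have "\<dots> = z j" by (subst sum.delta) (use K in \<open>auto simp: not_less\<close>)
    finally show "z j = (\<Sum>i<K. z i * dl i j)" by simp
  qed
  have Gz: "G z \<simeq> (\<Sum>i<K. scal (z i) * G (dl i))"
    by (subst ze, rule G_lincomb) (auto intro: sq_dl)
  have "p * G z \<simeq> p * (\<Sum>i<K. scal (z i) * G (dl i))" using Gz by (rule cl_mull)
  also have "\<dots> = (\<Sum>i<K. scal (z i) * (p * G (dl i)))"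
    unfolding sum_distrib_left by (rule sum.cong) (simp, metis mult.assoc scal_comm)
  also have "\<dots> \<simeq> (\<Sum>i<K. scal (z i) * (G (dl i) * p))"
    using H by (intro cl_sum cl_mull) auto
  also have "\<dots> = (\<Sum>i<K. scal (z i) * G (dl i)) * p"
    by (simp add: sum_distrib_right mult.assoc)
  also have "\<dots> \<simeq> G z * p" using cl_sym[OF Gz] by (rule cl_mulr)
  finally show ?thesis .
qed

definition fw :: "'a fword \<Rightarrow> 'a list" where "fw u = (case u of FWord xs \<Rightarrow> xs)"

lemma fw_FWord[simp]: "fw (FWord xs) = xs" by (simp add: fw_def)

lemma single_cons: "Poly_Mapping.single (FWord (x # xs)) (1::complex) = gen x * Poly_Mapping.single (FWord xs) 1"
  by (simp add: gen_def mult_single)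

lemma gen_span:
  assumes "ON n f" "inspan n f (Rep_l2 x)"
  shows "\<exists>L. gen x \<simeq> ev f L \<and> (\<forall>(c, as)\<in>set L. set as \<subseteq> {..<n})"
proof -
  obtain d where d: "Rep_l2 x = (\<lambda>i. \<Sum>a<n. d a * f a i)" using assms(2) unfolding inspan_def by blast
  have "gen x = G (\<lambda>i. \<Sum>a<n. d a * f a i)" using d by (simp add: gen_G)
  also have "\<dots> \<simeq> (\<Sum>a<n. scal (d a) * G (f a))"
    by (rule G_lincomb) (auto intro: ON_sq[OF assms(1)])
  also have "(\<Sum>a<n. scal (d a) * G (f a)) = ev f (map (\<lambda>a. (d a, [a])) [0..<n])"
    by (simp add: ev_def comp_def atLeast0LessThan[symmetric] sum_set_upt_conv_sum_list_nat[symmetric])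
  finally show ?thesis by (intro exI[of _ "map (\<lambda>a. (d a, [a])) [0..<n]"]) auto
qed

lemma mono_span:
  assumes "ON n f" "\<forall>x\<in>set xs. inspan n f (Rep_l2 x)"
  shows "\<exists>L. Poly_Mapping.single (FWord xs) 1 \<simeq> ev f L \<and> (\<forall>(c, as)\<in>set L. set as \<subseteq> {..<n})"
  using assms(2)
proof (induction xs)
  case Nil
  have "Poly_Mapping.single (FWord []) (1::complex) = ev f [(1, [])]"
    by (simp add: zero_fword_def[symmetric])
  then show ?case by (intro exI[of _ "[(1, [])]"]) auto
next
  case (Cons x xs)
  obtain L1 where L1: "gen x \<simeq> ev f L1" "\<forall>(c, as)\<in>set L1. set as \<subseteq> {..<n}"
    using gen_span[OF assms(1), of x] Cons.prems by auto
  obtain L2 where L2: "Poly_Mapping.single (FWord xs) 1 \<simeq> ev f L2" "\<forall>(c, as)\<in>set L2. set as \<subseteq> {..<n}"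
    using Cons by auto
  have "Poly_Mapping.single (FWord (x # xs)) 1 \<simeq> ev f L1 * ev f L2"
    unfolding single_cons using L1(1) L2(1) by (rule cl_mul)
  also have "\<dots> = ev f (mulL L1 L2)" by (simp add: ev_mulL)
  finally show ?case using mulL_words[OF L1(2) L2(2)] by blast
qed

lemma pm_span:
  assumes "ON n f"
  shows "(\<forall>u\<in>Poly_Mapping.keys p. \<forall>x\<in>set (fw u). inspan n f (Rep_l2 x)) \<Longrightarrow>
    \<exists>L. p \<simeq> ev f L \<and> (\<forall>(c, as)\<in>set L. set as \<subseteq> {..<n})"
proof (induction p rule: update_induct)
  case const then show ?case by (intro exI[of _ "[]"]) simp
next
  case (update g a b)
  have ks: "Poly_Mapping.keys (Poly_Mapping.update a b g) = insert a (Poly_Mapping.keys g)"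
    using update(2) by (simp add: keys_update)
  obtain L where L: "g \<simeq> ev f L" "\<forall>(c, as)\<in>set L. set as \<subseteq> {..<n}"
    using update ks by auto
  obtain xs where a: "a = FWord xs" by (cases a) auto
  obtain M where M: "Poly_Mapping.single (FWord xs) 1 \<simeq> ev f M" "\<forall>(c, as)\<in>set M. set as \<subseteq> {..<n}"
    using mono_span[OF assms, of xs] update.prems ks a by auto
  have sb: "Poly_Mapping.single a b = scal b * Poly_Mapping.single (FWord xs) 1"
    by (simp add: a scal_single mult_single)
  have "Poly_Mapping.update a b g = g + scal b * Poly_Mapping.single (FWord xs) 1"
    using update(1) by (simp add: update_eq_add sb)
  also have "\<dots> \<simeq> ev f L + scal b * ev f M" using L(1) M(1) by (intro cl_add cl_mull)
  also have "\<dots> = ev f (L @ map (\<lambda>(c, as). (b * c, as)) M)" by (simp add: ev_append ev_scale)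
  finally show ?case using L(2) M(2) by (intro exI[of _ "L @ map (\<lambda>(c, as). (b * c, as)) M"]) auto
qed

lemma ev_split: "ev f L = ev f (filter (\<lambda>(c, as). even (length as)) L) + ev f (filter (\<lambda>(c, as). odd (length as)) L)"
  by (induction L) (auto simp: algebra_simps)

lemma ev_even_fix: "\<forall>(c, as)\<in>set (L :: (complex \<times> nat list) list). even (length as) \<Longrightarrow> map (\<lambda>(c, as). (c * (-1) ^ length as, as)) L = L"
proof (rule map_idI)
  fix x assume h: "\<forall>(c, as)\<in>set L. even (length as)" and x: "x \<in> set L"
  obtain c as where cx: "x = (c, as)" by force
  have "even (length as)" using h x cx by auto
  then have "(-1::complex) ^ length as = 1" using neg1_pow[of "length as"] by presburger
  then show "(case x of (c, as) \<Rightarrow> (c * (-1) ^ length as, as)) = x" using cx by simp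
qed

lemma ev_odd_neg: "\<forall>(c, as)\<in>set L. odd (length as) \<Longrightarrow> ev f (map (\<lambda>(c, as). (c * (-1) ^ length as, as)) L) = - ev f L"
proof -
  assume h: "\<forall>(c, as)\<in>set L. odd (length as)"
  have e: "map (\<lambda>(c, as). (c * (-1) ^ length as, as)) L = map (\<lambda>(c, as). ((-1) * c, as)) L"
  proof (rule map_cong)
    fix x assume x: "x \<in> set L"
    obtain c as where cx: "x = (c, as)" by force
    have "odd (length as)" using h x cx by auto
    then have "(-1::complex) ^ length as = -1" using neg1_pow[of "length as"] by presburger
    then show "(case x of (c, as) \<Rightarrow> (c * (-1) ^ length as, as)) = (case x of (c, as) \<Rightarrow> ((-1) * c, as))"
      using cx by (simp add: neg1_pow)
  qed simp
  have "ev f (map (\<lambda>(c, as). (c * (-1) ^ length as, as)) L) = ev f (map (\<lambda>(c, as). ((-1) * c, as)) L)"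
    using e by (rule arg_cong)
  also have "\<dots> = scal (-1) * ev f L" by (rule ev_scale[symmetric])
  also have "\<dots> = - ev f L" by (simp add: scal_uminus)
  finally show ?thesis .
qed

theorem main_sub:
  assumes H: "\<forall>i. p * G (dl i) \<simeq> G (dl i) * p"
  shows "\<exists>c. p \<simeq> scal c"
proof -
  define LS where "LS = Rep_l2 ` (\<Union>u\<in>Poly_Mapping.keys p. set (fw u))"
  have "finite LS" unfolding LS_def by auto
  then obtain ws where ws: "set ws = LS" using finite_list by blast
  have "\<forall>w\<in>set ws. sq w" using ws by (auto simp: LS_def sq_Rep)
  then obtain n f v where Inv: "Inv n f v" and sp: "\<forall>w\<in>set ws. inspan n f w"
    using gs_list by blast
  have ON: "ON n f" using Inv by (rule Inv_ON)
  have "\<forall>u\<in>Poly_Mapping.keys p. \<forall>x\<in>set (fw u). inspan n f (Rep_l2 x)"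
    using sp ws by (auto simp: LS_def)
  then obtain L where L: "p \<simeq> ev f L" "\<forall>(c, as)\<in>set L. set as \<subseteq> {..<n}"
    using pm_span[OF ON] by blast
  define L0 where "L0 = filter (\<lambda>(c, as). even (length as)) L"
  define L1 where "L1 = filter (\<lambda>(c, as). odd (length as)) L"
  define x0 where "x0 = ev f L0"
  define x1 where "x1 = ev f L1"
  have w0: "\<forall>(c, as)\<in>set L0. set as \<subseteq> {..<n}" and w1: "\<forall>(c, as)\<in>set L1. set as \<subseteq> {..<n}"
    using L(2) by (auto simp: L0_def L1_def)
  have e0: "\<forall>(c, as)\<in>set L0. even (length as)" and e1: "\<forall>(c, as)\<in>set L1. odd (length as)"
    by (auto simp: L0_def L1_def)
  have px: "p \<simeq> x0 + x1" using L(1) ev_split[of f L] by (simp add: x0_def x1_def L0_def L1_def)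
  have comm: "(x0 + x1) * G z \<simeq> G z * (x0 + x1)" if "fs z" for z
  proof -
    have "(x0 + x1) * G z \<simeq> p * G z" using cl_sym[OF px] by (rule cl_mulr)
    also have "\<dots> \<simeq> G z * p" by (rule comm_fs[OF H that])
    also have "\<dots> \<simeq> G z * (x0 + x1)" using px by (rule cl_mull)
    finally show ?thesis .
  qed
  have c0: "G z * x0 \<simeq> x0 * G z" if "sq z" "\<forall>b<n. bf z (f b) = 0" for z
    using G_comm_ev_perp[OF ON that w0] ev_even_fix[OF e0] by (simp add: x0_def)
  have c1: "G z * x1 \<simeq> - x1 * G z" if "sq z" "\<forall>b<n. bf z (f b) = 0" for z
    using G_comm_ev_perp[OF ON that w1] ev_odd_neg[OF e1] by (simp add: x1_def)
  obtain z where z: "fs z" "\<forall>a<n. bf z (f a) = 0" "bf z z \<noteq> 0" using exists_z[OF Inv] by blast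
  have sqz: "sq z" using z(1) by (rule fs_sq)
  have x1z: "x1 * G z \<simeq> 0"
  proof -
    have "x0 * G z + x1 * G z \<simeq> G z * x0 + G z * x1" using comm[OF z(1)] by (simp add: algebra_simps)
    also have "\<dots> \<simeq> x0 * G z + (- x1 * G z)" using c0[OF sqz z(2)] c1[OF sqz z(2)] by (rule cl_add)
    finally have "x0 * G z + x1 * G z - x0 * G z \<simeq> x0 * G z + (- x1 * G z) - x0 * G z"
      by (rule cl_diff) simp
    then have "x1 * G z \<simeq> - (x1 * G z)" by simp
    then have "x1 * G z + x1 * G z \<simeq> - (x1 * G z) + x1 * G z" by (rule cl_add) simp
    then have "scal (1/2) * (x1 * G z + x1 * G z) \<simeq> scal (1/2) * 0" by (intro cl_mull) simp
    moreover have "scal (1/2) * (x1 * G z + x1 * G z) = x1 * G z"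
    proof -
      have "scal (1/2) * (x1 * G z + x1 * G z) = (scal (1/2) + scal (1/2)) * (x1 * G z)"
        by (simp add: algebra_simps)
      also have "\<dots> = x1 * G z" by (simp flip: scal_add)
      finally show ?thesis .
    qed
    ultimately show ?thesis by simp
  qed
  have x10: "x1 \<simeq> 0"
  proof -
    have "x1 * G z * G z \<simeq> 0 * G z" using x1z by (rule cl_mulr)
    then have "x1 * (G z * G z) \<simeq> 0" by (simp add: mult.assoc)
    moreover have "x1 * (G z * G z) \<simeq> x1 * scal (bf z z)" using G_sq[OF sqz] by (rule cl_mull)
    ultimately have "x1 * scal (bf z z) \<simeq> 0" using cl_sym cl_trans by blast
    then have "x1 * scal (bf z z) * scal (1 / bf z z) \<simeq> 0 * scal (1 / bf z z)" by (rule cl_mulr)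
    then show ?thesis using z(3) by (simp add: mult.assoc)
  qed
  have px0: "p \<simeq> x0"
  proof -
    have "p \<simeq> x0 + x1" by (rule px)
    also have "\<dots> \<simeq> x0 + 0" using x10 by (intro cl_add) auto
    finally show ?thesis by simp
  qed
  have cfa: "x0 * G (f a) \<simeq> G (f a) * x0" if a: "a < n" for a
  proof -
    define r where "r = (\<lambda>j. v a j - f a j)"
    have sqfa: "sq (f a)" using ON_sq[OF ON a] .
    have sqva: "sq (v a)" using Inv_sqv[OF Inv a] .
    have sqr: "sq r" unfolding r_def by (rule sq_diff[OF sqva sqfa])
    have va: "v a = (\<lambda>j. f a j + r j)" by (simp add: r_def)
    have rperp: "\<forall>b<n. bf r (f b) = 0"
      unfolding r_def using bf_diff_left[OF sqva sqfa ON_sq[OF ON]] Inv_bfv[OF Inv a] ON_bf[OF ON a] by simp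
    have cr: "G r * x0 \<simeq> x0 * G r" by (rule c0[OF sqr rperp])
    have cv: "x0 * G (v a) \<simeq> G (v a) * x0"
    proof -
      have "x0 * G (v a) \<simeq> p * G (v a)" using cl_sym[OF px0] by (rule cl_mulr)
      also have "\<dots> \<simeq> G (v a) * p" by (rule comm_fs[OF H Inv_fs[OF Inv a]])
      also have "\<dots> \<simeq> G (v a) * x0" using px0 by (rule cl_mull)
      finally show ?thesis .
    qed
    have Gv: "G (v a) \<simeq> G (f a) + G r" using G_add[OF sqfa sqr] va by simp
    have "x0 * G (f a) = x0 * (G (f a) + G r) - x0 * G r" by (simp add: algebra_simps)
    also have "\<dots> \<simeq> x0 * G (v a) - x0 * G r" using cl_sym[OF Gv] by (intro cl_diff cl_mull) auto
    also have "\<dots> \<simeq> G (v a) * x0 - G r * x0" using cv cl_sym[OF cr] by (rule cl_diff)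
    also have "\<dots> \<simeq> (G (f a) + G r) * x0 - G r * x0" using Gv by (intro cl_diff cl_mulr) auto
    also have "\<dots> = G (f a) * x0" by (simp add: algebra_simps)
    finally show ?thesis .
  qed
  have "\<exists>d. ev f L0 \<simeq> scal d"
  proof (rule central_even_scalar[OF ON _ cl_refl])
    show "\<forall>a<n. ev f L0 * G (f a) \<simeq> G (f a) * ev f L0" using cfa unfolding x0_def by blast
    show "\<forall>(c, as)\<in>set L0. set as \<subseteq> {..<n} \<and> even (length as)" using w0 e0 by auto
  qed
  then obtain d where "x0 \<simeq> scal d" unfolding x0_def by blast
  then show ?thesis using px0 cl_trans by blast
qed


theorem proposition2:
  shows "centralizer_units = {p. \<exists>c. cl_eq p (scal c)}"
proof (rule set_eqI, rule iffI)
  fix p assume "p \<in> centralizer_units"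
  then have "\<forall>i. p * G (dl i) \<simeq> G (dl i) * p"
    unfolding centralizer_units_def by (simp add: gen_unitv)
  then show "p \<in> {p. \<exists>c. cl_eq p (scal c)}" using main_sub by blast
next
  fix p assume "p \<in> {p. \<exists>c. cl_eq p (scal c)}"
  then obtain c where c: "p \<simeq> scal c" by blast
  have "cl_eq (p * gen (unitv i)) (gen (unitv i) * p)" for i
  proof -
    have "p * gen (unitv i) \<simeq> scal c * gen (unitv i)" using c by (rule cl_mulr)
    also have "\<dots> = gen (unitv i) * scal c" by (rule scal_comm)
    also have "\<dots> \<simeq> gen (unitv i) * p" using cl_sym[OF c] by (rule cl_mull)
    finally show ?thesis .
  qed
  then show "p \<in> centralizer_units" unfolding centralizer_units_def by blast
qed

end
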